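(* Let $P_0=\mathcal N(0,1)$ and $P_1=\mathcal N(\theta,1)$ for some $\theta>0$, in the sparse support recovery problem described in the context. Let $\delta>0$ and let $m\ge2$ be an even integer. The Simple Sequential Thresholding procedure (described in the context) with inputs $\delta$ and $m$ satisfies $\mathbb{P}_e<\delta$ provided $$m>\frac{\log s+\log\log_2\left(\frac{2n}{\delta}\right)+\log\left(\frac1\delta\right)}{\theta^2/4}.$$
   Context: Setting: $\mathcal S\subset\{1,\dots,n\}$ is an unknown support set with $|\mathcal S|=s$. For each $i$, one can draw i.i.d. samples of $Y_i$, where $Y_i\sim P_0$ if $i\notin\mathcal S$ and $Y_i\sim P_1$ if $i\in\mathcal S$, all samples independent. Simple Sequential Thresholding with inputs $\delta>0$ and even integer $m\ge2$: set $\mathcal S_1=\{1,\dots,n\}$ and $K=\lceil\log_2(2n/\delta)\rceil$. For $k=1,\dots,K$: for each $i\in\mathcal S_k$, draw $m/2$ fresh samples of $Y_i$ and let $T_i$ be their sum; set $\mathcal S_{k+1}=\{i\in\mathcal S_k: T_i>0\}$. Output $\hat{\mathcal S}=\mathcal S_{K+1}$. $\mathbb{P}_e=\mathbb{P}(\hat{\mathcal S}\ne\mathcal S)$. *)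

theory Defs
  imports "HOL-Probability.Probability"
begin

definition sst_rounds :: "nat \<Rightarrow> real \<Rightarrow> nat" where
  "sst_rounds n \<delta> = nat \<lceil>log 2 (2 * real n / \<delta>)\<rceil>"

text \<open>Simple Sequential Thresholding.  y i k j is the j-th fresh sample of Y_i drawn
  in round k (k = 1..K, j = 1..m/2).  sst_set n m y k is the set S_(k+1) after k rounds;
  sst_set n m y 0 = S_1 = {1..n}.\<close>
fun sst_set :: "nat \<Rightarrow> nat \<Rightarrow> (nat \<Rightarrow> nat \<Rightarrow> nat \<Rightarrow> real) \<Rightarrow> nat \<Rightarrow> nat set" where
  "sst_set n m y 0 = {1..n}"
| "sst_set n m y (Suc k) =
     {i \<in> sst_set n m y k. (\<Sum>j = 1..m div 2. y i (Suc k) j) > 0}"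

definition sst_output :: "nat \<Rightarrow> nat \<Rightarrow> real \<Rightarrow> (nat \<Rightarrow> nat \<Rightarrow> nat \<Rightarrow> real) \<Rightarrow> nat set" where
  "sst_output n m \<delta> y = sst_set n m y (sst_rounds n \<delta>)"

end

theory Submission
  imports Defs
begin


lemma normal_even: "normal_density 0 \<sigma> (- x) = normal_density 0 \<sigma> x"
  by (simp add: normal_density_def)

lemma half_normal:
  assumes "\<sigma> > 0"
  shows "(\<integral>\<^sup>+x. ennreal (normal_density 0 \<sigma> x) * indicator {..0} x \<partial>lborel) = 1/2"
    and "(\<integral>\<^sup>+x. ennreal (normal_density 0 \<sigma> x) * indicator {0<..} x \<partial>lborel) = 1/2"
proof -
  define I1 where "I1 = (\<integral>\<^sup>+x. ennreal (normal_density 0 \<sigma> x) * indicator {..0} x \<partial>lborel)"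
  define I2 where "I2 = (\<integral>\<^sup>+x. ennreal (normal_density 0 \<sigma> x) * indicator {0<..} x \<partial>lborel)"
  have tot: "(\<integral>\<^sup>+x. ennreal (normal_density 0 \<sigma> x) \<partial>lborel) = 1"
    using assms by (subst nn_integral_eq_integral) (auto simp: integrable_normal_density integral_normal_density)
  have "(\<integral>\<^sup>+x. ennreal (normal_density 0 \<sigma> x) \<partial>lborel)
     = (\<integral>\<^sup>+x. ennreal (normal_density 0 \<sigma> x) * indicator {..0} x + ennreal (normal_density 0 \<sigma> x) * indicator {0<..} x \<partial>lborel)"
    by (intro nn_integral_cong) (auto simp: indicator_def)
  also have "\<dots> = I1 + I2" unfolding I1_def I2_def
    by (intro nn_integral_add) auto
  finally have sum: "I1 + I2 = 1" using tot by simp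
  have "I1 = (\<integral>\<^sup>+x. ennreal (normal_density 0 \<sigma> (0 + -1 * x)) * indicator {..0} (0 + -1 * x) \<partial>lborel)"
    unfolding I1_def by (subst nn_integral_real_affine[of _ "-1" 0]) auto
  also have "\<dots> = (\<integral>\<^sup>+x. ennreal (normal_density 0 \<sigma> x) * indicator {0..} x \<partial>lborel)"
    by (intro nn_integral_cong) (auto simp: normal_even indicator_def)
  also have "\<dots> = I2" unfolding I2_def
    by (intro nn_integral_cong_AE) (use AE_lborel_singleton[of 0] in \<open>auto elim!: eventually_mono simp: indicator_def\<close>)
  finally have eq: "I1 = I2" .
  have "I1 = 1/2"
  proof -
    have "2 * I1 = 1" using sum eq by (simp add: mult_2)
    have "I1 = (I1*2)/2" by (rule mult_divide_eq_ennreal[symmetric]) auto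
    then show ?thesis using \<open>2 * I1 = 1\<close> by (simp add: mult.commute)
  qed
  then show "I1 = 1/2" "I2 = 1/2" using eq unfolding I1_def I2_def by auto
qed

lemma normal_tail_le0:
  assumes "prob_space M" "distributed M lborel X (normal_density a \<sigma>)" "a \<ge> 0" "\<sigma> > 0"
  shows "measure M {\<omega>\<in>space M. X \<omega> \<le> 0} \<le> exp (-a\<^sup>2/(2*\<sigma>\<^sup>2)) / 2"
proof -
  interpret prob_space M by fact
  have eq: "{\<omega>\<in>space M. X \<omega> \<le> 0} = X -` {..0} \<inter> space M" by auto
  have "emeasure M {\<omega>\<in>space M. X \<omega> \<le> 0} = (\<integral>\<^sup>+x. ennreal (normal_density a \<sigma> x) * indicator {..0} x \<partial>lborel)"
    unfolding eq using assms(2) by (rule distributed_emeasure) auto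
  also have "\<dots> \<le> (\<integral>\<^sup>+x. ennreal (exp (-a\<^sup>2/(2*\<sigma>\<^sup>2))) * (ennreal (normal_density 0 \<sigma> x) * indicator {..0} x) \<partial>lborel)"
  proof (intro nn_integral_mono)
    fix x :: real
    show "ennreal (normal_density a \<sigma> x) * indicator {..0} x \<le> ennreal (exp (-a\<^sup>2/(2*\<sigma>\<^sup>2))) * (ennreal (normal_density 0 \<sigma> x) * indicator {..0} x)"
    proof (cases "x \<le> 0")
      case True
      have "(x-a)\<^sup>2 \<ge> a\<^sup>2 + x\<^sup>2" using True assms(3) by (simp add: power2_eq_square algebra_simps mult_nonneg_nonpos)
      then have "-(x-a)\<^sup>2/(2*\<sigma>\<^sup>2) \<le> -a\<^sup>2/(2*\<sigma>\<^sup>2) + -(x-0)\<^sup>2/(2*\<sigma>\<^sup>2)"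
        using assms(4) by (simp add: divide_simps)
      then have "exp (-(x-a)\<^sup>2/(2*\<sigma>\<^sup>2)) \<le> exp (-a\<^sup>2/(2*\<sigma>\<^sup>2)) * exp (-(x-0)\<^sup>2/(2*\<sigma>\<^sup>2))"
        by (simp add: exp_add[symmetric])
      then have "normal_density a \<sigma> x \<le> exp (-a\<^sup>2/(2*\<sigma>\<^sup>2)) * normal_density 0 \<sigma> x"
        unfolding normal_density_def by (simp add: divide_right_mono)
      then show ?thesis using True by (simp add: ennreal_mult'[symmetric] ennreal_leI)
    qed simp
  qed
  also have "\<dots> = ennreal (exp (-a\<^sup>2/(2*\<sigma>\<^sup>2))) * (1/2)"
    by (subst nn_integral_cmult) (auto simp: half_normal(1)[OF assms(4)])
  also have "\<dots> = ennreal (exp (-a\<^sup>2/(2*\<sigma>\<^sup>2)) / 2)"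
    using ennreal_divide_numeral[of "exp (-a\<^sup>2/(2*\<sigma>\<^sup>2))" "num.Bit0 num.One"] by (simp add: divide_ennreal_def)
  finally have h: "emeasure M {\<omega>\<in>space M. X \<omega> \<le> 0} \<le> ennreal (exp (-a\<^sup>2/(2*\<sigma>\<^sup>2)) / 2)" .
  show ?thesis unfolding measure_def by (rule enn2real_leI[OF _ h]) simp
qed

lemma normal_gt0:
  assumes "prob_space M" "distributed M lborel X (normal_density 0 \<sigma>)" "\<sigma> > 0"
  shows "measure M {\<omega>\<in>space M. X \<omega> > 0} \<le> 1/2"
proof -
  interpret prob_space M by fact
  have eq: "{\<omega>\<in>space M. X \<omega> > 0} = X -` {0<..} \<inter> space M" by auto
  have "emeasure M {\<omega>\<in>space M. X \<omega> > 0} = (\<integral>\<^sup>+x. ennreal (normal_density 0 \<sigma> x) * indicator {0<..} x \<partial>lborel)"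
    unfolding eq using assms(2) by (rule distributed_emeasure) auto
  also have "\<dots> = 1/2" by (rule half_normal(2)[OF assms(3)])
  also have "(1/2::ennreal) = ennreal (1/2)" using ennreal_divide_numeral[of 1 "num.Bit0 num.One"] by simp
  finally have "measure M {\<omega>\<in>space M. X \<omega> > 0} = enn2real (ennreal (1/2))" by (simp only: measure_def)
  then show ?thesis by (subst (asm) enn2real_ennreal) auto
qed



lemma two_powr_chord:
  fixes f :: real
  assumes "0 \<le> f" "f \<le> 1"
  shows "2 powr (-f) \<le> 1 - f/2"
proof -
  have "exp ((1 - f) *\<^sub>R 0 + f *\<^sub>R (- ln 2)) \<le> (1 - f) * exp 0 + f * exp (- ln 2)"
    using assms by (intro convex_onD[OF exp_convex]) auto
  moreover have "exp (- ln 2) = (1/2::real)" by (simp add: exp_minus)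
  moreover have "2 powr (-f) = exp ((1 - f) *\<^sub>R 0 + f *\<^sub>R (- ln 2))"
    by (simp add: powr_def)
  ultimately show ?thesis by simp
qed

lemma lin_aux: "(a::real) * d * c + d * e = d * (a * c + e)"
  by (simp add: algebra_simps)

lemma final_ineq:
  fixes n s K :: nat and \<delta> x :: real
  assumes d: "0 < \<delta>" "\<delta> \<le> 1" and sn: "s \<le> n"
    and K: "K = nat \<lceil>log 2 (2 * real n / \<delta>)\<rceil>"
    and x: "x > ln (real s) + ln (log 2 (2 * real n / \<delta>)) + ln (1 / \<delta>)"
  shows "real s * (real K * (exp (-x) / 2)) + real (n - s) * (1/2)^K < \<delta>"
proof (cases "n = 0")
  case True then show ?thesis using sn d by simp
next
  case False
  define L where "L = log 2 (2 * real n / \<delta>)"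
  have n1: "real n \<ge> 1" using False by simp
  have q: "2 * real n / \<delta> \<ge> 2" using n1 d by (simp add: field_simps)
  have L1: "L \<ge> 1" unfolding L_def using q by (simp add: le_log_iff)
  have KL: "real K \<ge> L" "real K < L + 1" unfolding K L_def[symmetric] using L1
    by (auto simp: of_nat_nat) linarith
  define f where "f = real K - L"
  have f01: "0 \<le> f" "f < 1" using KL unfolding f_def by linarith+
  have pL: "2 powr L = 2 * real n / \<delta>" unfolding L_def using q by simp
  have "(1/2::real)^K = 2 powr (- real K)"
  proof -
    have "(2::real) powr (- real K) = inverse (2 powr real K)" by (rule powr_minus)
    also have "(2::real) powr real K = 2 ^ K" by (rule powr_realpow) linarith
    finally show ?thesis by (simp only: power_one_over inverse_eq_divide)
  qed
  also have "\<dots> = 2 powr (-L + -f)" unfolding f_def by simp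
  also have "\<dots> = 2 powr (-L) * 2 powr (-f)" by (rule powr_add)
  also have "2 powr (-L) = \<delta> / (2 * real n)" unfolding powr_minus pL by simp
  finally have half: "(1/2::real)^K = \<delta> / (2 * real n) * 2 powr (-f)" .
  have chord: "2 powr (-f) \<le> 1 - f/2" using f01 by (intro two_powr_chord) auto
  have nullb: "real (n - s) * (1/2)^K \<le> real (n - s) / real n * (\<delta> / 2) * (1 - f/2)"
  proof -
    have "\<delta> / (2 * real n) * 2 powr (-f) \<le> \<delta> / (2 * real n) * (1 - f/2)"
      using d n1 by (intro mult_left_mono[OF chord]) simp
    then have "real (n - s) * (\<delta> / (2 * real n) * 2 powr (-f)) \<le> real (n - s) * (\<delta> / (2 * real n) * (1 - f/2))"
      by (rule mult_left_mono) simp_all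
    also have "real (n - s) * (\<delta> / (2 * real n) * (1 - f/2)) = real (n - s) / real n * (\<delta> / 2) * (1 - f/2)"
      by (simp add: ac_simps)
    finally show ?thesis unfolding half .
  qed
  show ?thesis
  proof (cases "s = 0")
    case True
    have e1: "real (n - s) / real n = 1" using True n1 by simp
    have "real (n - s) * (1/2)^K \<le> 1 * (\<delta> / 2) * (1 - f/2)" using nullb unfolding e1 .
    also have "\<dots> \<le> \<delta>/2" using f01 d by (simp add: mult_left_le)
    finally have "real (n - s) * (1/2)^K \<le> \<delta>/2" .
    moreover have "real s * (real K * (exp (-x) / 2)) = 0" using True by simp
    ultimately show ?thesis using d by linarith
  next
    case False
    have s1: "real s \<ge> 1" using False by simp
    have "ln (real s * L / \<delta>) = ln (real s) + ln L + ln (1/\<delta>)"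
      using s1 L1 d by (simp add: ln_mult ln_div ln_one)
    then have "x > ln (real s * L / \<delta>)" using x unfolding L_def by simp
    then have "exp (-x) < exp (- ln (real s * L / \<delta>))" by simp
    also have "\<dots> = \<delta> / (real s * L)" using s1 L1 d by (simp add: exp_minus)
    finally have ex: "exp (-x) < \<delta> / (real s * L)" .
    have Kpos: "real K > 0" using KL L1 by simp
    have "real s * (real K * (exp (-x) / 2)) < real s * (real K * (\<delta> / (real s * L) / 2))"
      using ex s1 Kpos by (intro mult_strict_left_mono) auto
    also have "\<dots> = \<delta>/2 * (1 + f/L)" using s1 L1 unfolding f_def by (simp add: field_simps)
    finally have sig: "real s * (real K * (exp (-x) / 2)) < \<delta>/2 * (1 + f/L)" .
    have key: "real (n - s) / real n * (1 - f/2) + (1 + f/L) \<le> 2"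
    proof (cases "s = n")
      case True then show ?thesis using f01 L1 by (simp add: field_simps)
    next
      case False
      then have "n \<ge> 2" using s1 sn by linarith
      then have "2 * real n / \<delta> \<ge> 4" using d by (simp add: field_simps)
      then have L2: "L \<ge> 2" unfolding L_def by (simp add: le_log_iff)
      have "f/L \<le> f/2" using L2 f01 by (intro divide_left_mono) auto
      moreover have "real (n - s) / real n \<le> 1" using sn n1 by simp
      moreover have "1 - f/2 \<ge> 0" using f01 by simp
      ultimately have "real (n - s) / real n * (1 - f/2) \<le> 1 - f/2"
        by (intro mult_left_le_one_le) auto
      with \<open>f/L \<le> f/2\<close> show ?thesis by linarith
    qed
    have "real (n - s) / real n * (\<delta> / 2) * (1 - f/2) + \<delta>/2 * (1 + f/L)
        = \<delta>/2 * (real (n - s) / real n * (1 - f/2) + (1 + f/L))" by (rule lin_aux)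
    also have "\<dots> \<le> \<delta>/2 * 2" using key d by (intro mult_left_mono) auto
    finally show ?thesis using nullb sig by linarith
  qed
qed

lemma sst_set_char:
  "sst_set n m y k = {i\<in>{1..n}. \<forall>k'\<in>{1..k}. (\<Sum>j = 1..m div 2. y i k' j) > 0}"
proof (induction k)
  case 0 then show ?case by auto
next
  case (Suc k)
  show ?case unfolding sst_set.simps Suc
    apply (auto simp: le_Suc_eq)
    by (drule bspec[of _ _ "Suc k"]) auto
qed

theorem theorem4:
  fixes M :: "'a measure" and Y :: "nat \<Rightarrow> nat \<Rightarrow> nat \<Rightarrow> 'a \<Rightarrow> real"
    and n s m :: nat and S :: "nat set" and \<theta> \<delta> :: real
  assumes "prob_space M"
    and "S \<subseteq> {1..n}" and "card S = s"
    and "\<theta> > 0" and "\<delta> > 0" and "even m" and "m \<ge> 2"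
    and "prob_space.indep_vars M (\<lambda>_. borel) (\<lambda>(i, k, j). Y i k j)
           ({1..n} \<times> {1..sst_rounds n \<delta>} \<times> {1..m div 2})"
    and "\<And>i k j. i \<in> {1..n} \<Longrightarrow> k \<in> {1..sst_rounds n \<delta>} \<Longrightarrow> j \<in> {1..m div 2} \<Longrightarrow>
           distributed M lborel (Y i k j)
             (\<lambda>x. ennreal (normal_density (if i \<in> S then \<theta> else 0) 1 x))"
    and "real m > (ln (real s) + ln (log 2 (2 * real n / \<delta>)) + ln (1 / \<delta>)) / (\<theta>\<^sup>2 / 4)"
  shows "measure M {\<omega> \<in> space M. sst_output n m \<delta> (\<lambda>i k j. Y i k j \<omega>) \<noteq> S} < \<delta>"
proof -
  interpret prob_space M by fact
  note indep = assms(8) and dist = assms(9)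
  define c where "c = m div 2"
  define K where "K = sst_rounds n \<delta>"
  define X where "X = (\<lambda>(i::nat, k::nat, j::nat). Y i k j)"
  define Sm where "Sm i k \<omega> = (\<Sum>j = 1..c. Y i k j \<omega>)" for i k \<omega>
  define I where "I = {1..n} \<times> {1..K} \<times> {1..c}"
  have c1: "c \<ge> 1" using assms(7) unfolding c_def by simp
  have indX: "indep_vars (\<lambda>_. borel) X I" using indep unfolding X_def I_def K_def c_def .
  have rvX: "X t \<in> borel_measurable M" if "t \<in> I" for t
    using indX that unfolding indep_vars_def by auto
  have rv: "Y i k j \<in> borel_measurable M" if "i \<in> {1..n}" "k \<in> {1..K}" "j \<in> {1..c}" for i k j
    using rvX[of "(i,k,j)"] that unfolding X_def I_def by auto
  have rvS: "Sm i k \<in> borel_measurable M" if "i \<in> {1..n}" "k \<in> {1..K}" for i k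
    unfolding Sm_def using rv that by (intro borel_measurable_sum) auto
  show ?thesis
  proof (cases "\<delta> \<le> 1")
    case False
    then show ?thesis using prob_le_1 by (meson le_less_trans not_le)
  next
    case d1: True
    define \<mu> where "\<mu> i = (if i \<in> S then \<theta> else 0)" for i
    have distS: "distributed M lborel (Sm i k) (normal_density (real c * \<mu> i) (sqrt (real c)))"
      if i: "i \<in> {1..n}" and k: "k \<in> {1..K}" for i k
    proof -
      define J where "J = {i} \<times> {k} \<times> {1..c}"
      have JI: "J \<subseteq> I" using i k unfolding J_def I_def by auto
      have Jeq: "J = (\<lambda>j. (i,k,j)) ` {1..c}" unfolding J_def by auto
      have inj: "inj_on (\<lambda>j. (i,k,j)) {1..c}" by (auto simp: inj_on_def)
      have "distributed M lborel (\<lambda>\<omega>. \<Sum>t\<in>J. X t \<omega>) (normal_density (\<Sum>t\<in>J. \<mu> i) (sqrt (\<Sum>t\<in>J. 1\<^sup>2)))"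
      proof (rule sum_indep_normal)
        show "finite J" unfolding J_def by simp
        show "J \<noteq> {}" using c1 unfolding J_def by auto
        show "indep_vars (\<lambda>_. borel) X J" using indX JI by (rule indep_vars_subset)
        show "0 < (1::real)" by simp
        fix t assume "t \<in> J"
        then obtain j where j: "j \<in> {1..c}" "t = (i,k,j)" unfolding J_def by auto
        show "distributed M lborel (X t) (normal_density (\<mu> i) 1)"
          using dist[of i k j] i k j unfolding X_def \<mu>_def K_def c_def by simp
      qed
      moreover have "(\<lambda>\<omega>. \<Sum>t\<in>J. X t \<omega>) = Sm i k"
        unfolding Jeq Sm_def by (subst sum.reindex[OF inj]) (simp add: X_def)
      moreover have "card J = c" unfolding Jeq using card_image[OF inj] by simp
      ultimately show ?thesis by simp
    qed
    have indS: "indep_vars (\<lambda>_. borel) (Sm i) {1..K}" if i: "i \<in> {1..n}" for i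
    proof -
      define J where "J k = {i} \<times> {k} \<times> {1..c}" for k :: nat
      have "indep_vars (\<lambda>k. PiM (J k) (\<lambda>_. borel)) (\<lambda>k \<omega>. restrict (\<lambda>t. X t \<omega>) (J k)) {1..K}"
        using indX i by (intro indep_vars_restrict) (auto simp: J_def I_def disjoint_family_on_def)
      then have "indep_vars (\<lambda>_. borel) (\<lambda>k \<omega>. (\<lambda>g. \<Sum>j=1..c. g (i,k,j)) (restrict (\<lambda>t. X t \<omega>) (J k))) {1..K}"
        by (rule indep_vars_compose2) (auto simp: J_def intro!: borel_measurable_sum measurable_component_singleton)
      moreover have "(\<lambda>k \<omega>. (\<lambda>g. \<Sum>j=1..c. g (i,k,j)) (restrict (\<lambda>t. X t \<omega>) (J k))) = Sm i"
        by (auto simp: J_def Sm_def X_def intro!: ext sum.cong)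
      ultimately show ?thesis by simp
    qed
    have m2c: "m = 2 * c" using assms(6) unfolding c_def by simp
    have cm: "real c = real m / 2" using m2c by simp
    have sig: "measure M {\<omega>\<in>space M. Sm i k \<omega> \<le> 0} \<le> exp (-(real m * \<theta>\<^sup>2/4)) / 2"
      if i: "i \<in> S" and k: "k \<in> {1..K}" for i k
    proof -
      have iS: "i \<in> {1..n}" using i assms(2) by auto
      have mu: "\<mu> i = \<theta>" using i unfolding \<mu>_def by simp
      have cpos: "real c > 0" using c1 by simp
      have fact1: "measure M {\<omega>\<in>space M. Sm i k \<omega> \<le> 0} \<le> exp (-(real c * \<mu> i)\<^sup>2/(2*(sqrt (real c))\<^sup>2)) / 2"
      proof (rule normal_tail_le0[OF assms(1) distS[OF iS k]])
        show "0 \<le> real c * \<mu> i" using mu assms(4) by simp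
        show "0 < sqrt (real c)" using cpos by simp
      qed
      have sq: "(sqrt (real c))\<^sup>2 = real c" using cpos by simp
      have "(real c * \<theta>)\<^sup>2/(2*real c) = real c * \<theta>\<^sup>2 / 2"
        using cpos by (simp add: power_mult_distrib power2_eq_square)
      also have "\<dots> = real m * \<theta>\<^sup>2/4" unfolding cm by simp
      finally have eqn: "-(real c * \<mu> i)\<^sup>2/(2*(sqrt (real c))\<^sup>2) = -(real m * \<theta>\<^sup>2/4)"
        unfolding mu sq by simp
      show ?thesis using fact1 unfolding eqn .
    qed
    have nul: "measure M {\<omega>\<in>space M. \<forall>k\<in>{1..K}. Sm i k \<omega> > 0} \<le> (1/2)^K"
      if i: "i \<in> {1..n} - S" for i
    proof (cases "K = 0")
      case True then show ?thesis by simp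
    next
      case False
      have iS: "i \<in> {1..n}" using i by auto
      have "{\<omega>\<in>space M. \<forall>k\<in>{1..K}. Sm i k \<omega> > 0} = (\<Inter>k\<in>{1..K}. Sm i k -` {0<..} \<inter> space M)"
        using False by auto
      also have "prob \<dots> = (\<Prod>k\<in>{1..K}. prob (Sm i k -` {0<..} \<inter> space M))"
        using False by (intro indep_varsD[OF indS[OF iS]]) auto
      also have "\<dots> \<le> (\<Prod>k\<in>{1..K}. 1/2)"
      proof (intro prod_mono conjI)
        fix k assume k: "k \<in> {1..K}"
        have "distributed M lborel (Sm i k) (normal_density 0 (sqrt (real c)))"
          using distS[OF iS k] i unfolding \<mu>_def by simp
        then have "measure M {\<omega>\<in>space M. Sm i k \<omega> > 0} \<le> 1/2"
          using c1 by (intro normal_gt0[OF assms(1)]) auto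
        moreover have "Sm i k -` {0<..} \<inter> space M = {\<omega>\<in>space M. Sm i k \<omega> > 0}" by auto
        ultimately show "prob (Sm i k -` {0<..} \<inter> space M) \<le> 1/2" by simp
      qed auto
      finally show ?thesis by simp
    qed
    define B where "B = (\<Union>i\<in>S. \<Union>k\<in>{1..K}. {\<omega>\<in>space M. Sm i k \<omega> \<le> 0})
        \<union> (\<Union>i\<in>{1..n} - S. {\<omega>\<in>space M. \<forall>k\<in>{1..K}. Sm i k \<omega> > 0})"
    have sub: "{\<omega> \<in> space M. sst_output n m \<delta> (\<lambda>i k j. Y i k j \<omega>) \<noteq> S} \<subseteq> B"
    proof
      fix \<omega> assume "\<omega> \<in> {\<omega> \<in> space M. sst_output n m \<delta> (\<lambda>i k j. Y i k j \<omega>) \<noteq> S}"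
      then have sp: "\<omega> \<in> space M" and ne0: "sst_output n m \<delta> (\<lambda>i k j. Y i k j \<omega>) \<noteq> S"
        by auto
      have out: "sst_output n m \<delta> (\<lambda>i k j. Y i k j \<omega>) = {i\<in>{1..n}. \<forall>k\<in>{1..K}. Sm i k \<omega> > 0}"
        unfolding sst_output_def sst_set_char Sm_def K_def c_def by (rule refl)
      have ne: "{i\<in>{1..n}. \<forall>k\<in>{1..K}. Sm i k \<omega> > 0} \<noteq> S" using ne0 out by simp
      show "\<omega> \<in> B"
      proof (cases "\<exists>i\<in>S. \<exists>k\<in>{1..K}. Sm i k \<omega> \<le> 0")
        case True
        then obtain i k where "i \<in> S" "k \<in> {1..K}" "Sm i k \<omega> \<le> 0" by blast
        then show ?thesis using sp unfolding B_def by blast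
      next
        case False
        have "S \<subseteq> {i\<in>{1..n}. \<forall>k\<in>{1..K}. Sm i k \<omega> > 0}"
        proof
          fix i assume i: "i \<in> S"
          then have "i \<in> {1..n}" using assms(2) by blast
          moreover have "\<forall>k\<in>{1..K}. Sm i k \<omega> > 0" using False i by (simp add: not_le)
          ultimately show "i \<in> {i\<in>{1..n}. \<forall>k\<in>{1..K}. Sm i k \<omega> > 0}" by blast
        qed
        with ne obtain i where "i \<in> {1..n}" "i \<notin> S" "\<forall>k\<in>{1..K}. Sm i k \<omega> > 0" by blast
        then have "\<omega> \<in> {\<omega>\<in>space M. \<forall>k\<in>{1..K}. Sm i k \<omega> > 0}" "i \<in> {1..n} - S" using sp by auto
        then show ?thesis unfolding B_def by blast
      qed
    qed
    have mS: "{\<omega>\<in>space M. Sm i k \<omega> \<le> 0} \<in> sets M" if "i \<in> S" "k \<in> {1..K}" for i k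
    proof -
      have "i \<in> {1..n}" using that assms(2) by blast
      then show ?thesis using borel_measurable_le[OF rvS[OF _ that(2)] borel_measurable_const[of 0]] by simp
    qed
    have mN: "{\<omega>\<in>space M. \<forall>k\<in>{1..K}. Sm i k \<omega> > 0} \<in> sets M" if "i \<in> {1..n}" for i
    proof (rule sets.sets_Collect_finite_All)
      fix k assume "k \<in> {1..K}"
      then show "{\<omega>\<in>space M. Sm i k \<omega> > 0} \<in> sets M"
        using borel_measurable_less[OF borel_measurable_const[of 0] rvS[OF that]] by simp
    qed simp
    have fS: "finite S" using assms(2) finite_subset by blast
    define U1 where "U1 = (\<Union>i\<in>S. \<Union>k\<in>{1..K}. {\<omega>\<in>space M. Sm i k \<omega> \<le> 0})"
    define U2 where "U2 = (\<Union>i\<in>{1..n} - S. {\<omega>\<in>space M. \<forall>k\<in>{1..K}. Sm i k \<omega> > 0})"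
    have U1s: "U1 \<in> sets M" unfolding U1_def using mS fS by blast
    have U2s: "U2 \<in> sets M" unfolding U2_def using mN by blast
    have BU: "B = U1 \<union> U2" unfolding B_def U1_def U2_def ..
    have st1: "measure M {\<omega> \<in> space M. sst_output n m \<delta> (\<lambda>i k j. Y i k j \<omega>) \<noteq> S} \<le> measure M B"
      using sub U1s U2s BU by (intro finite_measure_mono) auto
    have st2: "measure M B \<le> measure M U1 + measure M U2"
      unfolding BU using U1s U2s by (rule measure_Un_le)
    have "measure M U1 \<le> (\<Sum>i\<in>S. measure M (\<Union>k\<in>{1..K}. {\<omega>\<in>space M. Sm i k \<omega> \<le> 0}))"
      unfolding U1_def using mS fS by (intro measure_UNION_le) blast+
    also have "\<dots> \<le> (\<Sum>i\<in>S. \<Sum>k\<in>{1..K}. measure M {\<omega>\<in>space M. Sm i k \<omega> \<le> 0})"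
      using mS by (intro sum_mono measure_UNION_le) blast+
    also have "\<dots> \<le> (\<Sum>i\<in>S. \<Sum>k\<in>{1..K}. exp (-(real m * \<theta>\<^sup>2/4)) / 2)"
      using sig by (intro sum_mono) blast
    also have "\<dots> = real s * (real K * (exp (-(real m * \<theta>\<^sup>2/4)) / 2))"
      using assms(3) by simp
    finally have st3: "measure M U1 \<le> real s * (real K * (exp (-(real m * \<theta>\<^sup>2/4)) / 2))" .
    have "measure M U2 \<le> (\<Sum>i\<in>{1..n} - S. measure M {\<omega>\<in>space M. \<forall>k\<in>{1..K}. Sm i k \<omega> > 0})"
      unfolding U2_def using mN by (intro measure_UNION_le) blast+
    also have "\<dots> \<le> (\<Sum>i\<in>{1..n} - S. (1/2)^K)"
      using nul by (intro sum_mono) blast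
    also have "\<dots> = real (n - s) * (1/2)^K"
      using assms(2,3) fS by (simp add: card_Diff_subset)
    finally have st4: "measure M U2 \<le> real (n - s) * (1/2)^K" .
    have st5: "real s * (real K * (exp (-(real m * \<theta>\<^sup>2/4)) / 2)) + real (n - s) * (1/2)^K < \<delta>"
    proof (rule final_ineq)
      show "0 < \<delta>" "\<delta> \<le> 1" using assms(5) d1 by auto
      have "card S \<le> card {1..n}" using assms(2) by (intro card_mono) auto
      then show "s \<le> n" using assms(3) by simp
      show "K = nat \<lceil>log 2 (2 * real n / \<delta>)\<rceil>" unfolding K_def sst_rounds_def ..
      have "\<theta>\<^sup>2/4 > 0" using assms(4) by simp
      then show "real m * \<theta>\<^sup>2/4 > ln (real s) + ln (log 2 (2 * real n / \<delta>)) + ln (1 / \<delta>)"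
        using assms(10) by (simp add: pos_divide_less_eq mult.commute)
    qed
    show ?thesis using st1 st2 st3 st4 st5 by linarith
  qed
qed

end
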